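(* Let $Q$ be a quadrilateral in $K^2$. (1) Every $Q$-orthogonal pair $\{\ell_1,\ell_2\}$ of bisectors of $Q$ such that $\ell_1$ and $\ell_2$ are not both parallel to a pair of parallel sides or parallel diagonals of $Q$ is $Q$-antipodal, and hence is a $Q$-pair. (2) Every $Q$-antipodal pair of bisectors of $Q$ that do not share a midpoint is $Q$-orthogonal, and hence is a $Q$-pair.
   Context: $K$ is a field of characteristic $\neq 2$. Every line $L$ in $K^2$ has an equation $tX-uY+v=0$ normalized so that $t=1$ if $u=0$ and $u=1$ if $u\neq 0$; coefficients denoted $t_L,u_L,v_L$. A quadrilateral $Q=ABA'B'$ consists of four distinct lines $A,B,A',B'$ (sides), not all through one point, with adjacent sides ($A,B$; $B,A'$; $A',B'$; $B',A$) not parallel; opposite sides may be parallel. Vertices: $A\cap B$, $B\cap A'$, $A'\cap B'$, $B'\cap A$ (two may coincide if three sides are concurrent). Diagonals: the lines through nonadjacent vertices. The centroid is the average of the four vertices. Let $\alpha=t_Au_Bu_{A'}u_{B'}-u_At_Bu_{A'}u_{B'}+u_Au_Bt_{A'}u_{B'}-u_Au_Bu_{A'}t_{B'}$, $\beta=t_Au_Bt_{A'}u_{B'}-u_At_Bu_{A'}t_{B'}$, $\gamma=t_At_Bt_{A'}u_{B'}-t_At_Bu_{A'}t_{B'}+t_Au_Bt_{A'}t_{B'}-u_At_Bt_{A'}t_{B'}$, and $\langle \mathbf v,\mathbf w\rangle_Q=\mathbf v^T\begin{pmatrix}\gamma&-\beta\\-\beta&\alpha\end{pmatrix}\mathbf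 w$. Lines $\ell_1,\ell_2$ are $Q$-orthogonal if $\langle (u_{\ell_1},t_{\ell_1}),(u_{\ell_2},t_{\ell_2})\rangle_Q=0$. A line $\ell$ crosses a pair $\{\ell_1,\ell_2\}$ if distinct from both and not parallel to both; $\mathrm{mid}_{\{\ell_1,\ell_2\}}(\ell)$ is the midpoint of the points where $\ell$ meets $\ell_1,\ell_2$ (the point at infinity of $\ell$ if one is at infinity). $\ell$ bisects $Q$ (is a bisector) if $\mathrm{mid}_{\mathsf P}(\ell)$ is the same for all pairs $\mathsf P$ among $\{A,A'\},\{B,B'\}$ that $\ell$ crosses; this common point is the midpoint of the bisector. A pair $\{\ell_1,\ell_2\}$ of bisectors (possibly $\ell_1=\ell_2$) is $Q$-antipodal if the midpoint of their midpoints is the centroid of $Q$, and is a $Q$-pair if it is both $Q$-antipodal and $Q$-orthogonal. *)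

theory Defs
  imports Main
begin

text \<open>A line of K^2 is represented by the coefficient triple (t,u,v) of its
  normalized equation t X - u Y + v = 0 (t = 1 if u = 0, and u = 1 if u \<noteq> 0).\<close>

type_synonym 'a line = "'a \<times> 'a \<times> 'a"
type_synonym 'a point = "'a \<times> 'a"

definition tL :: "'a line \<Rightarrow> 'a" where "tL l = fst l"
definition uL :: "'a line \<Rightarrow> 'a" where "uL l = fst (snd l)"
definition vL :: "'a line \<Rightarrow> 'a" where "vL l = snd (snd l)"

definition is_line :: "'a::field line \<Rightarrow> bool" where
  "is_line l \<longleftrightarrow> (uL l = 0 \<and> tL l = 1) \<or> uL l = 1"

definition on_line :: "'a::field point \<Rightarrow> 'a line \<Rightarrow> bool" where
  "on_line p l \<longleftrightarrow> tL l * fst p - uL l * snd p + vL l = 0"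

text \<open>Parallel = same direction (reflexive: a line is parallel to itself).\<close>
definition parallel :: "'a::field line \<Rightarrow> 'a line \<Rightarrow> bool" where
  "parallel l1 l2 \<longleftrightarrow> tL l1 * uL l2 = uL l1 * tL l2"

definition meet :: "'a::field line \<Rightarrow> 'a line \<Rightarrow> 'a point" where
  "meet l1 l2 = (THE p. on_line p l1 \<and> on_line p l2)"

definition line_through :: "'a::field point \<Rightarrow> 'a point \<Rightarrow> 'a line" where
  "line_through p q = (THE l. is_line l \<and> on_line p l \<and> on_line q l)"

definition midpt :: "'a::field point \<Rightarrow> 'a point \<Rightarrow> 'a point" where
  "midpt p q = ((fst p + fst q) / 2, (snd p + snd q) / 2)"

definition quadrilateral :: "'a::field line \<Rightarrow> 'a line \<Rightarrow> 'a line \<Rightarrow> 'a line \<Rightarrow> bool" where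
  "quadrilateral A B Ap Bp \<longleftrightarrow>
     is_line A \<and> is_line B \<and> is_line Ap \<and> is_line Bp \<and>
     distinct [A, B, Ap, Bp] \<and>
     \<not> (\<exists>p. on_line p A \<and> on_line p B \<and> on_line p Ap \<and> on_line p Bp) \<and>
     \<not> parallel A B \<and> \<not> parallel B Ap \<and> \<not> parallel Ap Bp \<and> \<not> parallel Bp A"

definition centroid :: "'a::field line \<Rightarrow> 'a line \<Rightarrow> 'a line \<Rightarrow> 'a line \<Rightarrow> 'a point" where
  "centroid A B Ap Bp =
     (let v1 = meet A B; v2 = meet B Ap; v3 = meet Ap Bp; v4 = meet Bp A in
      ((fst v1 + fst v2 + fst v3 + fst v4) / 4, (snd v1 + snd v2 + snd v3 + snd v4) / 4))"

definition diag1 :: "'a::field line \<Rightarrow> 'a line \<Rightarrow> 'a line \<Rightarrow> 'a line \<Rightarrow> 'a line" where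
  "diag1 A B Ap Bp = line_through (meet A B) (meet Ap Bp)"

definition diag2 :: "'a::field line \<Rightarrow> 'a line \<Rightarrow> 'a line \<Rightarrow> 'a line \<Rightarrow> 'a line" where
  "diag2 A B Ap Bp = line_through (meet B Ap) (meet Bp A)"

definition qalpha :: "'a::field line \<Rightarrow> 'a line \<Rightarrow> 'a line \<Rightarrow> 'a line \<Rightarrow> 'a" where
  "qalpha A B Ap Bp =
     tL A * uL B * uL Ap * uL Bp - uL A * tL B * uL Ap * uL Bp
     + uL A * uL B * tL Ap * uL Bp - uL A * uL B * uL Ap * tL Bp"

definition qbeta :: "'a::field line \<Rightarrow> 'a line \<Rightarrow> 'a line \<Rightarrow> 'a line \<Rightarrow> 'a" where
  "qbeta A B Ap Bp = tL A * uL B * tL Ap * uL Bp - uL A * tL B * uL Ap * tL Bp"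

definition qgamma :: "'a::field line \<Rightarrow> 'a line \<Rightarrow> 'a line \<Rightarrow> 'a line \<Rightarrow> 'a" where
  "qgamma A B Ap Bp =
     tL A * tL B * tL Ap * uL Bp - tL A * tL B * uL Ap * tL Bp
     + tL A * uL B * tL Ap * tL Bp - uL A * tL B * tL Ap * tL Bp"

definition qform :: "'a::field line \<Rightarrow> 'a line \<Rightarrow> 'a line \<Rightarrow> 'a line \<Rightarrow> 'a \<times> 'a \<Rightarrow> 'a \<times> 'a \<Rightarrow> 'a" where
  "qform A B Ap Bp v w =
     fst v * (qgamma A B Ap Bp * fst w - qbeta A B Ap Bp * snd w)
     + snd v * (- qbeta A B Ap Bp * fst w + qalpha A B Ap Bp * snd w)"

definition Q_orthogonal :: "'a::field line \<Rightarrow> 'a line \<Rightarrow> 'a line \<Rightarrow> 'a line \<Rightarrow> 'a line \<Rightarrow> 'a line \<Rightarrow> bool" where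
  "Q_orthogonal A B Ap Bp l1 l2 \<longleftrightarrow> qform A B Ap Bp (uL l1, tL l1) (uL l2, tL l2) = 0"

text \<open>Projective points on a line: a finite point, or the point at infinity of the line.\<close>
datatype 'a ppoint = Fin "'a \<times> 'a" | Infty

definition crosses :: "'a::field line \<Rightarrow> 'a line \<Rightarrow> 'a line \<Rightarrow> bool" where
  "crosses l l1 l2 \<longleftrightarrow> l \<noteq> l1 \<and> l \<noteq> l2 \<and> \<not> (parallel l l1 \<and> parallel l l2)"

text \<open>mid_{l1,l2}(l), meaningful when l crosses {l1,l2}.\<close>
definition mid :: "'a::field line \<Rightarrow> 'a line \<Rightarrow> 'a line \<Rightarrow> 'a ppoint" where
  "mid l1 l2 l = (if parallel l l1 \<or> parallel l l2 then Infty
                  else Fin (midpt (meet l l1) (meet l l2)))"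

text \<open>l bisects Q with midpoint m (l crosses at least one of the pairs
  {A,A'}, {B,B'} -- always the case for a quadrilateral).\<close>
definition bisector_mid :: "'a::field line \<Rightarrow> 'a line \<Rightarrow> 'a line \<Rightarrow> 'a line \<Rightarrow> 'a line \<Rightarrow> 'a ppoint \<Rightarrow> bool" where
  "bisector_mid A B Ap Bp l m \<longleftrightarrow> is_line l \<and>
     (crosses l A Ap \<or> crosses l B Bp) \<and>
     (crosses l A Ap \<longrightarrow> mid A Ap l = m) \<and>
     (crosses l B Bp \<longrightarrow> mid B Bp l = m)"

definition bisects :: "'a::field line \<Rightarrow> 'a line \<Rightarrow> 'a line \<Rightarrow> 'a line \<Rightarrow> 'a line \<Rightarrow> bool" where
  "bisects A B Ap Bp l \<longleftrightarrow> (\<exists>m. bisector_mid A B Ap Bp l m)"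

definition bis_midpoint :: "'a::field line \<Rightarrow> 'a line \<Rightarrow> 'a line \<Rightarrow> 'a line \<Rightarrow> 'a line \<Rightarrow> 'a ppoint" where
  "bis_midpoint A B Ap Bp l = (THE m. bisector_mid A B Ap Bp l m)"

definition Q_antipodal :: "'a::field line \<Rightarrow> 'a line \<Rightarrow> 'a line \<Rightarrow> 'a line \<Rightarrow> 'a line \<Rightarrow> 'a line \<Rightarrow> bool" where
  "Q_antipodal A B Ap Bp l1 l2 \<longleftrightarrow>
     bisects A B Ap Bp l1 \<and> bisects A B Ap Bp l2 \<and>
     (\<exists>m1 m2. bis_midpoint A B Ap Bp l1 = Fin m1 \<and> bis_midpoint A B Ap Bp l2 = Fin m2 \<and>
              midpt m1 m2 = centroid A B Ap Bp)"

definition Q_pair :: "'a::field line \<Rightarrow> 'a line \<Rightarrow> 'a line \<Rightarrow> 'a line \<Rightarrow> 'a line \<Rightarrow> 'a line \<Rightarrow> bool" where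
  "Q_pair A B Ap Bp l1 l2 \<longleftrightarrow> Q_antipodal A B Ap Bp l1 l2 \<and> Q_orthogonal A B Ap Bp l1 l2"

definition both_par_to_par_pair :: "'a::field line \<Rightarrow> 'a line \<Rightarrow> 'a line \<Rightarrow> 'a line \<Rightarrow> 'a line \<Rightarrow> 'a line \<Rightarrow> bool" where
  "both_par_to_par_pair A B Ap Bp l1 l2 \<longleftrightarrow>
     (parallel A Ap \<and> parallel l1 A \<and> parallel l2 A) \<or>
     (parallel B Bp \<and> parallel l1 B \<and> parallel l2 B) \<or>
     (parallel (diag1 A B Ap Bp) (diag2 A B Ap Bp) \<and>
        parallel l1 (diag1 A B Ap Bp) \<and> parallel l2 (diag1 A B Ap Bp))"

end

theory Submission
  imports Defs
begin

definition g1x :: "'a::field \<Rightarrow> 'a \<Rightarrow> 'a \<Rightarrow> 'a \<Rightarrow> 'a \<Rightarrow> 'a" where "g1x ka kb k0 a b = 2*ka*a + kb*b + k0"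
definition g1y :: "'a::field \<Rightarrow> 'a \<Rightarrow> 'a" where "g1y kb a = kb*a"
definition g2x :: "'a::field \<Rightarrow> 'a \<Rightarrow> 'a" where "g2x ma b = ma*b"
definition g2y :: "'a::field \<Rightarrow> 'a \<Rightarrow> 'a \<Rightarrow> 'a \<Rightarrow> 'a \<Rightarrow> 'a" where "g2y ma mb m0 a b = ma*a + 2*mb*b + m0"
definition QA :: "'a::field \<Rightarrow> 'a \<Rightarrow> 'a \<Rightarrow> 'a \<Rightarrow> 'a \<Rightarrow> 'a \<Rightarrow> 'a \<Rightarrow> 'a \<Rightarrow> 'a" where
  "QA ka kb ma mb x1 y1 x2 y2 = kb*mb*x1*x2 - ka*mb*(x1*y2+y1*x2) + ka*ma*y1*y2"
definition QP :: "'a::field \<Rightarrow> 'a \<Rightarrow> 'a \<Rightarrow> 'a \<Rightarrow> 'a \<Rightarrow> 'a \<Rightarrow> 'a \<Rightarrow> 'a \<Rightarrow> 'a" where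
  "QP ka kb ma mb p1 q1 p2 q2 = ka*ma*p1*p2 + ka*mb*(p1*q2+p2*q1) + kb*mb*q1*q2"
definition Phi :: "'a::field \<Rightarrow> 'a \<Rightarrow> 'a \<Rightarrow> 'a \<Rightarrow> 'a \<Rightarrow> 'a \<Rightarrow> 'a \<Rightarrow> 'a \<Rightarrow> 'a" where
  "Phi ka kb k0 ma mb m0 a b = g1x ka kb k0 a b * g2y ma mb m0 a b - g1y kb a * g2x ma b"

lemma G_all:
  fixes ka kb k0 ma mb m0 a b a' b' :: "'a::field"
  assumes hA: "2*ka*mb*(ka*mb - kb*ma) * a' = mb*(-k0*(ka*mb - kb*ma) + ka*(kb*m0 - k0*mb)) - 2*ka*mb*(ka*mb - kb*ma)*a"
    and hB: "2*ka*mb*(ka*mb - kb*ma) * b' = ka*(mb*(ma*k0 - ka*m0) - m0*(ka*mb - kb*ma)) - 2*ka*mb*(ka*mb - kb*ma)*b"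
  shows "2*(2*ka*mb*(ka*mb - kb*ma))*QA ka kb ma mb (g1x ka kb k0 a b) (g1y kb a) (g1x ka kb k0 a' b') (g1y kb a')
           = -(kb^2)*(2*ka*mb*(ka*mb - kb*ma))*Phi ka kb k0 ma mb m0 a b"
    and "2*(2*ka*mb*(ka*mb - kb*ma))*QA ka kb ma mb (g2x ma b) (g2y ma mb m0 a b) (g2x ma b') (g2y ma mb m0 a' b')
           = -(ma^2)*(2*ka*mb*(ka*mb - kb*ma))*Phi ka kb k0 ma mb m0 a b"
    and "2*(2*ka*mb*(ka*mb - kb*ma))*QA ka kb ma mb (g1x ka kb k0 a b) (g1y kb a) (g2x ma b') (g2y ma mb m0 a' b')
           = (2*ka*mb - kb*ma)*(2*ka*mb*(ka*mb - kb*ma))*Phi ka kb k0 ma mb m0 a b"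
    and "2*(2*ka*mb*(ka*mb - kb*ma))*QA ka kb ma mb (g2x ma b) (g2y ma mb m0 a b) (g1x ka kb k0 a' b') (g1y kb a')
           = (2*ka*mb - kb*ma)*(2*ka*mb*(ka*mb - kb*ma))*Phi ka kb k0 ma mb m0 a b"
  using hA hB unfolding QA_def Phi_def g1x_def g1y_def g2x_def g2y_def
  by algebra+

lemma four_nz: "(2::'a::field) \<noteq> 0 \<Longrightarrow> (4::'a) \<noteq> 0"
  by (metis mult_eq_0_iff numeral_Bit0 one_add_one mult_2)

lemma phi_zero:
  fixes ka kb k0 ma mb m0 a b p q :: "'a::field"
  assumes "g1x ka kb k0 a b * p + g1y kb a * q = 0" "g2x ma b * p + g2y ma mb m0 a b * q = 0"
    and "p \<noteq> 0 \<or> q \<noteq> 0"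
  shows "Phi ka kb k0 ma mb m0 a b = 0"
proof -
  have "p * Phi ka kb k0 ma mb m0 a b = 0" "q * Phi ka kb k0 ma mb m0 a b = 0"
    using assms(1,2) unfolding Phi_def by algebra+
  then show ?thesis using assms(3) by auto
qed

lemma QA_sym: "QA ka kb ma mb x1 y1 x2 y2 = QA ka kb ma mb x2 y2 x1 y1"
  unfolding QA_def by (simp add: algebra_simps)

lemma QP_sym: "QP ka kb ma mb x1 y1 x2 y2 = QP ka kb ma mb x2 y2 x1 y1"
  unfolding QP_def by (simp add: algebra_simps)

lemma QA_rot: "QA ka kb ma mb (-q1) p1 x y = QP ka kb ma mb p1 q1 y (-x)"
  unfolding QA_def QP_def by (simp add: algebra_simps)

lemma rot:
  fixes x y p q h1 h2 :: "'a::field"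
  assumes "x*p + y*q = 0" "x \<noteq> 0 \<or> y \<noteq> 0" "QA ka kb ma mb x y h1 h2 = 0"
  shows "QA ka kb ma mb (-q) p h1 h2 = 0"
proof -
  have "y * QA ka kb ma mb (-q) p h1 h2 = p * QA ka kb ma mb x y h1 h2"
       "x * QA ka kb ma mb (-q) p h1 h2 = - q * QA ka kb ma mb x y h1 h2"
    using assms(1) unfolding QA_def by algebra+
  then show ?thesis using assms(2,3) by auto
qed

lemma nondeg:
  fixes ka kb ma mb p2 q2 v1 v2 p1 q1 :: "'a::field"
  assumes "ka \<noteq> 0" "mb \<noteq> 0" "ka*mb - kb*ma \<noteq> 0" "p2 \<noteq> 0 \<or> q2 \<noteq> 0"
    and "QP ka kb ma mb p2 q2 v1 v2 = 0" "QP ka kb ma mb p2 q2 p1 q1 = 0"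
  shows "v1*q1 - v2*p1 = 0"
proof -
  define s1 where "s1 = ka*ma*p2 + ka*mb*q2"
  define s2 where "s2 = ka*mb*p2 + kb*mb*q2"
  have "s1 * (v1*q1 - v2*p1) = 0" "s2 * (v1*q1 - v2*p1) = 0"
    using assms(5,6) unfolding QP_def s1_def s2_def by algebra+
  moreover have "s1 \<noteq> 0 \<or> s2 \<noteq> 0"
  proof (rule ccontr)
    assume "\<not> (s1 \<noteq> 0 \<or> s2 \<noteq> 0)"
    then have h: "s1 = 0" "s2 = 0" by auto
    have "ka*mb*(ka*mb - kb*ma)*p2 = 0" "ka*mb*(ka*mb - kb*ma)*q2 = 0"
      using h unfolding s1_def s2_def by algebra+
    then show False using assms(1-4) by auto
  qed
  ultimately show ?thesis by auto
qed

lemma lemZ: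
  fixes ka kb k0 ma mb m0 a b ac bc :: "'a::field"
  assumes ka: "ka \<noteq> 0" and mb: "mb \<noteq> 0" and D: "ka*mb - kb*ma \<noteq> 0" and two: "(2::'a) \<noteq> 0"
    and nc: "k0 \<noteq> 0 \<or> m0 \<noteq> 0"
    and hac: "4*ka*(ka*mb - kb*ma)*ac = -k0*(ka*mb - kb*ma) + ka*(kb*m0 - k0*mb)"
    and hbc: "4*mb*(ka*mb - kb*ma)*bc = mb*(ma*k0 - ka*m0) - m0*(ka*mb - kb*ma)"
    and z: "g1x ka kb k0 a b = 0" "g1y kb a = 0" "g2x ma b = 0" "g2y ma mb m0 a b = 0"
  shows "a = ac \<and> b = bc"
proof -
  have z1: "2*ka*a + kb*b + k0 = 0" and z2: "kb*a = 0" and z3: "ma*b = 0" and z4: "ma*a + 2*mb*b + m0 = 0"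
    using z unfolding g1x_def g1y_def g2x_def g2y_def by auto
  have four: "(4::'a) \<noteq> 0" using two by (metis mult_eq_0_iff numeral_Bit0 one_add_one mult_2)
  have key: "4*ka*(ka*mb - kb*ma)*(a - ac) = 0 \<and> 4*mb*(ka*mb - kb*ma)*(b - bc) = 0"
  proof (cases "kb = 0")
    case False
    then have a0: "a = 0" using z2 by auto
    show ?thesis
    proof (cases "ma = 0")
      case False
      then have "b = 0" using z3 by auto
      then have "k0 = 0" "m0 = 0" using z1 z4 a0 by auto
      then show ?thesis using nc by auto
    next
      case True
      show ?thesis using hac hbc z1 z4 a0 True by algebra
    qed
  next
    case True
    show ?thesis
    proof (cases "ma = 0")
      case False
      then have "b = 0" using z3 by auto
      then show ?thesis using hac hbc z1 z4 True by algebra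
    next
      case m: True
      show ?thesis using hac hbc z1 z4 True m by algebra
    qed
  qed
  then show ?thesis using ka mb D four by auto
qed

lemma iso:
  fixes ka kb k0 ma mb m0 a b p q :: "'a::field"
  assumes ka: "ka \<noteq> 0" and mb: "mb \<noteq> 0" and two: "(2::'a) \<noteq> 0"
    and e1: "g1x ka kb k0 a b * p + g1y kb a * q = 0" and e2: "g2x ma b * p + g2y ma mb m0 a b * q = 0"
    and d: "p \<noteq> 0 \<or> q \<noteq> 0" and iq: "QP ka kb ma mb p q p q = 0"
  shows "(kb = 0 \<and> p = 0) \<or> (ma = 0 \<and> q = 0) \<or>
         (k0*(ma*p + mb*q) - m0*(ka*p + kb*q) = 0 \<and> ka*m0*p + mb*k0*q = 0)"
proof -
  define X where "X = (2*ka*p + kb*q)*m0 - ma*k0*p"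
  define Y where "Y = kb*m0*q - (ma*p + 2*mb*q)*k0"
  have qX: "q*X = 0" and pY: "p*Y = 0"
    using e1 e2 iq unfolding X_def Y_def g1x_def g1y_def g2x_def g2y_def QP_def by algebra+
  show ?thesis
  proof (cases "p = 0")
    case True
    then have q: "q \<noteq> 0" using d by auto
    then have "X = 0" using qX by auto
    then have "kb*q*m0 = 0" using True unfolding X_def by simp
    then have "kb = 0 \<or> m0 = 0" using q by auto
    moreover have "m0 = 0 \<Longrightarrow> kb = 0"
    proof -
      assume "m0 = 0"
      have "kb*mb*(q*q) = 0" using iq True unfolding QP_def by simp
      then show "kb = 0" using mb q by auto
    qed
    ultimately show ?thesis using True by auto
  next
    case False
    note p = False
    show ?thesis
    proof (cases "q = 0")
      case True
      then have "Y = 0" using pY p by auto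
      then have "ma*p*k0 = 0" using True unfolding Y_def by simp
      then have "ma = 0 \<or> k0 = 0" using p by auto
      moreover have "k0 = 0 \<Longrightarrow> ma = 0"
      proof -
        have "ka*ma*(p*p) = 0" using iq True unfolding QP_def by simp
        then show "ma = 0" using ka p by auto
      qed
      ultimately show ?thesis using True by auto
    next
      case False
      then have "X = 0" "Y = 0" using qX pY p by auto
      then have "2*(k0*(ma*p + mb*q) - m0*(ka*p + kb*q)) = 0" "2*(ka*m0*p + mb*k0*q) = 0"
        unfolding X_def Y_def by algebra+
      then show ?thesis using two by (simp only: mult_eq_0_iff) blast
    qed
  qed
qed

lemma pair_step:
  fixes x1 y1 x2 y2 p1 q1 p2 q2 :: "'a::field"
  assumes "x1*p1 + y1*q1 = 0" "x1 \<noteq> 0 \<or> y1 \<noteq> 0" "x2*p2 + y2*q2 = 0" "x2 \<noteq> 0 \<or> y2 \<noteq> 0"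
    and "QA ka kb ma mb x1 y1 x2 y2 = 0"
  shows "QP ka kb ma mb p1 q1 p2 q2 = 0"
proof -
  have "QA ka kb ma mb (-q1) p1 x2 y2 = 0" using rot assms(1,2,5) by blast
  then have "QA ka kb ma mb x2 y2 (-q1) p1 = 0" using QA_sym by metis
  then have "QA ka kb ma mb (-q2) p2 (-q1) p1 = 0" using rot assms(3,4) by blast
  then have "QP ka kb ma mb p2 q2 p1 q1 = 0" using QA_rot[of ka kb ma mb q2 p2 "-q1" p1] by simp
  then show ?thesis using QP_sym by metis
qed

lemma transfer_step:
  fixes x y hx hy p1 q1 p2 q2 :: "'a::field"
  assumes "ka \<noteq> 0" "mb \<noteq> 0" "ka*mb - kb*ma \<noteq> 0"
    and "x*p2 + y*q2 = 0" "x \<noteq> 0 \<or> y \<noteq> 0" "p2 \<noteq> 0 \<or> q2 \<noteq> 0"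
    and "QA ka kb ma mb x y hx hy = 0" "QP ka kb ma mb p2 q2 p1 q1 = 0"
  shows "hx*p1 + hy*q1 = 0"
proof -
  have "QA ka kb ma mb (-q2) p2 hx hy = 0" using rot assms(4,5,7) by blast
  then have "QP ka kb ma mb p2 q2 hy (-hx) = 0" using QA_rot by metis
  then have "hy*q1 - (-hx)*p1 = 0" using nondeg assms(1,2,3,6,8) by blast
  then show ?thesis by (simp add: algebra_simps)
qed

lemma G_zero:
  fixes ka kb k0 ma mb m0 a b a' b' ac bc :: "'a::field"
  assumes ka: "ka \<noteq> 0" and mb: "mb \<noteq> 0" and D: "ka*mb - kb*ma \<noteq> 0" and two: "(2::'a) \<noteq> 0"
    and hac: "4*ka*(ka*mb - kb*ma)*ac = -k0*(ka*mb - kb*ma) + ka*(kb*m0 - k0*mb)"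
    and hbc: "4*mb*(ka*mb - kb*ma)*bc = mb*(ma*k0 - ka*m0) - m0*(ka*mb - kb*ma)"
    and aa: "a + a' = 2*ac" and bb: "b + b' = 2*bc"
    and ph: "Phi ka kb k0 ma mb m0 a b = 0"
  shows "QA ka kb ma mb (g1x ka kb k0 a b) (g1y kb a) (g1x ka kb k0 a' b') (g1y kb a') = 0"
    and "QA ka kb ma mb (g2x ma b) (g2y ma mb m0 a b) (g2x ma b') (g2y ma mb m0 a' b') = 0"
    and "QA ka kb ma mb (g1x ka kb k0 a b) (g1y kb a) (g2x ma b') (g2y ma mb m0 a' b') = 0"
    and "QA ka kb ma mb (g2x ma b) (g2y ma mb m0 a b) (g1x ka kb k0 a' b') (g1y kb a') = 0"
proof -
  have hA: "2*ka*mb*(ka*mb - kb*ma) * a' = mb*(-k0*(ka*mb - kb*ma) + ka*(kb*m0 - k0*mb)) - 2*ka*mb*(ka*mb - kb*ma)*a"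
    using hac aa by algebra
  have hB: "2*ka*mb*(ka*mb - kb*ma) * b' = ka*(mb*(ma*k0 - ka*m0) - m0*(ka*mb - kb*ma)) - 2*ka*mb*(ka*mb - kb*ma)*b"
    using hbc bb by algebra
  have H: "2*(2*ka*mb*(ka*mb - kb*ma)) \<noteq> 0" using ka mb D two four_nz[OF two] by simp
  note G = G_all[OF hA hB, unfolded ph mult_zero_right]
  show "QA ka kb ma mb (g1x ka kb k0 a b) (g1y kb a) (g1x ka kb k0 a' b') (g1y kb a') = 0"
    using G(1) H by (metis no_zero_divisors)
  show "QA ka kb ma mb (g2x ma b) (g2y ma mb m0 a b) (g2x ma b') (g2y ma mb m0 a' b') = 0"
    using G(2) H by (metis no_zero_divisors)
  show "QA ka kb ma mb (g1x ka kb k0 a b) (g1y kb a) (g2x ma b') (g2y ma mb m0 a' b') = 0"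
    using G(3) H by (metis no_zero_divisors)
  show "QA ka kb ma mb (g2x ma b) (g2y ma mb m0 a b) (g1x ka kb k0 a' b') (g1y kb a') = 0"
    using G(4) H by (metis no_zero_divisors)
qed

lemma half_eq: "x + y = 2*c \<Longrightarrow> x = c \<Longrightarrow> y = (c::'a::field)"
proof -
  assume h: "x + y = 2*c" and x: "x = c"
  have "c + y = c + c" using h unfolding x mult_2 .
  then show ?thesis by simp
qed
lemma half_eq2: "x + y = 2*c \<Longrightarrow> y = c \<Longrightarrow> x = (c::'a::field)"
  using half_eq[of y x c] by (simp add: add.commute)

lemma core2:
  fixes ka kb k0 ma mb m0 ac bc a1 b1 p1 q1 a2 b2 p2 q2 :: "'a::field"
  assumes ka: "ka \<noteq> 0" and mb: "mb \<noteq> 0" and D: "ka*mb - kb*ma \<noteq> 0" and two: "(2::'a) \<noteq> 0"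
    and nc: "k0 \<noteq> 0 \<or> m0 \<noteq> 0"
    and hac: "4*ka*(ka*mb - kb*ma)*ac = -k0*(ka*mb - kb*ma) + ka*(kb*m0 - k0*mb)"
    and hbc: "4*mb*(ka*mb - kb*ma)*bc = mb*(ma*k0 - ka*m0) - m0*(ka*mb - kb*ma)"
    and e11: "g1x ka kb k0 a1 b1 * p1 + g1y kb a1 * q1 = 0"
    and e21: "g2x ma b1 * p1 + g2y ma mb m0 a1 b1 * q1 = 0"
    and e12: "g1x ka kb k0 a2 b2 * p2 + g1y kb a2 * q2 = 0"
    and e22: "g2x ma b2 * p2 + g2y ma mb m0 a2 b2 * q2 = 0"
    and d1: "p1 \<noteq> 0 \<or> q1 \<noteq> 0" and d2: "p2 \<noteq> 0 \<or> q2 \<noteq> 0"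
    and aa: "a1 + a2 = 2*ac" and bb: "b1 + b2 = 2*bc" and ne: "\<not> (a1 = a2 \<and> b1 = b2)"
  shows "QP ka kb ma mb p1 q1 p2 q2 = 0"
proof -
  have ph: "Phi ka kb k0 ma mb m0 a1 b1 = 0" using phi_zero[OF e11 e21 d1] .
  note G = G_zero[OF ka mb D two hac hbc aa bb ph]
  have n1: "(g1x ka kb k0 a1 b1 \<noteq> 0 \<or> g1y kb a1 \<noteq> 0) \<or> (g2x ma b1 \<noteq> 0 \<or> g2y ma mb m0 a1 b1 \<noteq> 0)"
  proof (rule ccontr)
    assume "\<not> ?thesis"
    then have "a1 = ac \<and> b1 = bc" using lemZ[OF ka mb D two nc hac hbc, of a1 b1] by simp
    then show False using aa bb ne half_eq by metis
  qed
  have n2: "(g1x ka kb k0 a2 b2 \<noteq> 0 \<or> g1y kb a2 \<noteq> 0) \<or> (g2x ma b2 \<noteq> 0 \<or> g2y ma mb m0 a2 b2 \<noteq> 0)"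
  proof (rule ccontr)
    assume "\<not> ?thesis"
    then have "a2 = ac \<and> b2 = bc" using lemZ[OF ka mb D two nc hac hbc, of a2 b2] by simp
    then show False using aa bb ne half_eq2 by metis
  qed
  from n1 show ?thesis
  proof
    assume h1: "g1x ka kb k0 a1 b1 \<noteq> 0 \<or> g1y kb a1 \<noteq> 0"
    from n2 show ?thesis
    proof
      assume h2: "g1x ka kb k0 a2 b2 \<noteq> 0 \<or> g1y kb a2 \<noteq> 0"
      show ?thesis by (rule pair_step[OF e11 h1 e12 h2 G(1)])
    next
      assume h2: "g2x ma b2 \<noteq> 0 \<or> g2y ma mb m0 a2 b2 \<noteq> 0"
      show ?thesis by (rule pair_step[OF e11 h1 e22 h2 G(3)])
    qed
  next
    assume h1: "g2x ma b1 \<noteq> 0 \<or> g2y ma mb m0 a1 b1 \<noteq> 0"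
    from n2 show ?thesis
    proof
      assume h2: "g1x ka kb k0 a2 b2 \<noteq> 0 \<or> g1y kb a2 \<noteq> 0"
      show ?thesis by (rule pair_step[OF e21 h1 e12 h2 G(4)])
    next
      assume h2: "g2x ma b2 \<noteq> 0 \<or> g2y ma mb m0 a2 b2 \<noteq> 0"
      show ?thesis by (rule pair_step[OF e21 h1 e22 h2 G(2)])
    qed
  qed
qed

lemma core1:
  fixes ka kb k0 ma mb m0 ac bc a1 b1 p1 q1 a2 b2 p2 q2 :: "'a::field"
  assumes ka: "ka \<noteq> 0" and mb: "mb \<noteq> 0" and D: "ka*mb - kb*ma \<noteq> 0" and two: "(2::'a) \<noteq> 0"
    and nc: "k0 \<noteq> 0 \<or> m0 \<noteq> 0"
    and hac: "4*ka*(ka*mb - kb*ma)*ac = -k0*(ka*mb - kb*ma) + ka*(kb*m0 - k0*mb)"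
    and hbc: "4*mb*(ka*mb - kb*ma)*bc = mb*(ma*k0 - ka*m0) - m0*(ka*mb - kb*ma)"
    and e11: "g1x ka kb k0 a1 b1 * p1 + g1y kb a1 * q1 = 0"
    and e21: "g2x ma b1 * p1 + g2y ma mb m0 a1 b1 * q1 = 0"
    and e12: "g1x ka kb k0 a2 b2 * p2 + g1y kb a2 * q2 = 0"
    and e22: "g2x ma b2 * p2 + g2y ma mb m0 a2 b2 * q2 = 0"
    and d1: "p1 \<noteq> 0 \<or> q1 \<noteq> 0" and d2: "p2 \<noteq> 0 \<or> q2 \<noteq> 0"
    and orth: "QP ka kb ma mb p1 q1 p2 q2 = 0"
  shows "(a1 + a2 = 2*ac \<and> b1 + b2 = 2*bc) \<or>
         (p1*q2 = p2*q1 \<and> ((kb = 0 \<and> p1 = 0) \<or> (ma = 0 \<and> q1 = 0) \<or>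
           (k0*(ma*p1 + mb*q1) - m0*(ka*p1 + kb*q1) = 0 \<and> ka*m0*p1 + mb*k0*q1 = 0)))"
proof -
  define a' where "a' = 2*ac - a2"
  define b' where "b' = 2*bc - b2"
  have aa: "a2 + a' = 2*ac" and bb: "b2 + b' = 2*bc" unfolding a'_def b'_def by simp_all
  have ph: "Phi ka kb k0 ma mb m0 a2 b2 = 0" using phi_zero[OF e12 e22 d2] .
  note G = G_zero[OF ka mb D two hac hbc aa bb ph]
  have orth': "QP ka kb ma mb p2 q2 p1 q1 = 0" using orth QP_sym by metis
  have E': "g1x ka kb k0 a' b' * p1 + g1y kb a' * q1 = 0 \<and> g2x ma b' * p1 + g2y ma mb m0 a' b' * q1 = 0"
  proof (cases "(g1x ka kb k0 a2 b2 \<noteq> 0 \<or> g1y kb a2 \<noteq> 0)")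
    case True
    show ?thesis using transfer_step[OF ka mb D e12 True d2 G(1) orth'] transfer_step[OF ka mb D e12 True d2 G(3) orth'] by (rule conjI)
  next
    case F1: False
    show ?thesis
    proof (cases "(g2x ma b2 \<noteq> 0 \<or> g2y ma mb m0 a2 b2 \<noteq> 0)")
      case True
      show ?thesis using transfer_step[OF ka mb D e22 True d2 G(4) orth'] transfer_step[OF ka mb D e22 True d2 G(2) orth'] by (rule conjI)
    next
      case False
      then have "a2 = ac \<and> b2 = bc" using F1 lemZ[OF ka mb D two nc hac hbc, of a2 b2] by simp
      then have "a' = a2" "b' = b2" using half_eq[OF aa] half_eq[OF bb] by auto
      then show ?thesis using F1 False by simp
    qed
  qed
  show ?thesis
  proof (cases "QP ka kb ma mb p1 q1 p1 q1 = 0")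
    case False
    have "2*QP ka kb ma mb p1 q1 p1 q1 * (a1 - a') = 0" "2*QP ka kb ma mb p1 q1 p1 q1 * (b1 - b') = 0"
      using e11 e21 E' unfolding QP_def g1x_def g1y_def g2x_def g2y_def by algebra+
    then have "a1 = a'" "b1 = b'" using False two by auto
    then show ?thesis unfolding a'_def b'_def by simp
  next
    case True
    have par: "p2*q1 - q2*p1 = 0" using nondeg[OF ka mb D d1 orth True] .
    have "(kb = 0 \<and> p1 = 0) \<or> (ma = 0 \<and> q1 = 0) \<or>
         (k0*(ma*p1 + mb*q1) - m0*(ka*p1 + kb*q1) = 0 \<and> ka*m0*p1 + mb*k0*q1 = 0)"
      using iso[OF ka mb two e11 e21 d1 True] .
    moreover have "p1*q2 = p2*q1" using par by (simp add: algebra_simps)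
    ultimately show ?thesis by blast
  qed
qed

definition lval :: "'a::field line \<Rightarrow> 'a point \<Rightarrow> 'a" where
  "lval X p = tL X * fst p - uL X * snd p + vL X"
definition llin :: "'a::field line \<Rightarrow> 'a \<times> 'a \<Rightarrow> 'a" where
  "llin X d = tL X * fst d - uL X * snd d"
definition dirl :: "'a::field line \<Rightarrow> 'a \<times> 'a" where
  "dirl l = (uL l, tL l)"
definition cr :: "'a::field line \<Rightarrow> 'a line \<Rightarrow> 'a" where
  "cr X Y = tL X * uL Y - uL X * tL Y"

lemma on_line_lval: "on_line p X \<longleftrightarrow> lval X p = 0"
  unfolding on_line_def lval_def by simp

lemma parallel_cr: "parallel X Y \<longleftrightarrow> cr X Y = 0"
  unfolding parallel_def cr_def by simp

lemma llin_dirl: "llin X (dirl l) = cr X l"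
  unfolding llin_def dirl_def cr_def by (simp add: algebra_simps)

lemma cr_self: "cr X X = 0" unfolding cr_def by (simp add: algebra_simps)
lemma cr_anti: "cr X Y = - cr Y X" unfolding cr_def by (simp add: algebra_simps)

lemma is_line_dir: "is_line l \<Longrightarrow> uL l \<noteq> 0 \<or> tL l \<noteq> 0"
  unfolding is_line_def by auto

lemma cr_trans:
  assumes "cr X Y = 0" "cr X Z = 0" "uL X \<noteq> 0 \<or> tL X \<noteq> 0"
  shows "cr Y Z = 0"
proof -
  have "uL X * cr Y Z = 0" "tL X * cr Y Z = 0"
    using assms(1,2) unfolding cr_def by algebra+
  then show ?thesis using assms(3) by auto
qed

lemma meet_ex1:
  fixes X Y :: "'a::field line"
  assumes "\<not> parallel X Y"
  shows "\<exists>!p. on_line p X \<and> on_line p Y"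
proof -
  define D where "D = uL X * tL Y - tL X * uL Y"
  have D: "D \<noteq> 0" using assms unfolding parallel_def D_def by auto
  define p where "p = ((vL X * uL Y - uL X * vL Y)/D, (tL Y * vL X - tL X * vL Y)/D)"
  have e1: "tL X * (vL X * uL Y - uL X * vL Y) - uL X * (tL Y * vL X - tL X * vL Y) + vL X * D = 0"
    unfolding D_def by algebra
  have e2: "tL Y * (vL X * uL Y - uL X * vL Y) - uL Y * (tL Y * vL X - tL X * vL Y) + vL Y * D = 0"
    unfolding D_def by algebra
  have f: "t * (n1/D) - u * (n2/D) + v = (t * n1 - u * n2 + v * D)/D" for t u v n1 n2
    using D by (simp add: field_simps)
  have "on_line p X \<and> on_line p Y"
    unfolding on_line_def p_def fst_conv snd_conv f e1 e2 by simp
  moreover have "q = p" if "on_line q X \<and> on_line q Y" for q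
  proof -
    have h: "tL X * fst q - uL X * snd q + vL X = 0" "tL Y * fst q - uL Y * snd q + vL Y = 0"
      using that unfolding on_line_def by auto
    have "D * fst q = vL X * uL Y - uL X * vL Y" "D * snd q = tL Y * vL X - tL X * vL Y"
      using h unfolding D_def by algebra+
    then show "q = p" unfolding p_def using D by (simp add: field_simps prod_eq_iff)
  qed
  ultimately show ?thesis by blast
qed

lemma meet_on:
  assumes "\<not> parallel X Y"
  shows "on_line (meet X Y) X" "on_line (meet X Y) Y"
  using theI'[OF meet_ex1[OF assms]] unfolding meet_def by auto

lemma line_eqI: "tL l = tL l' \<Longrightarrow> uL l = uL l' \<Longrightarrow> vL l = vL l' \<Longrightarrow> l = l'"
  unfolding tL_def uL_def vL_def by (simp add: prod_eq_iff)

lemma lt_ex1: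
  fixes p q :: "'a::field point"
  assumes "p \<noteq> q"
  shows "\<exists>!l. is_line l \<and> on_line p l \<and> on_line q l"
proof -
  define wx where "wx = fst q - fst p"
  define wy where "wy = snd q - snd p"
  have w: "wx \<noteq> 0 \<or> wy \<noteq> 0" using assms unfolding wx_def wy_def by (auto simp: prod_eq_iff)
  have ex: "\<exists>l. is_line l \<and> on_line p l \<and> on_line q l"
  proof (cases "wx = 0")
    case True
    let ?l = "(1::'a, 0::'a, - fst p)"
    have "is_line ?l \<and> on_line p ?l \<and> on_line q ?l"
      using True unfolding is_line_def on_line_def tL_def uL_def vL_def wx_def by simp
    then show ?thesis by blast
  next
    case False
    let ?l = "(wy/wx, 1::'a, snd p - wy/wx * fst p)"
    have "is_line ?l \<and> on_line p ?l \<and> on_line q ?l"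
      using False unfolding is_line_def on_line_def tL_def uL_def vL_def
      by (simp add: field_simps wx_def wy_def)
    then show ?thesis by blast
  qed
  have un: "l = l'" if l: "is_line l \<and> on_line p l \<and> on_line q l" and l': "is_line l' \<and> on_line p l' \<and> on_line q l'" for l l'
  proof -
    have l1: "tL l * fst p - uL l * snd p + vL l = 0" "tL l * fst q - uL l * snd q + vL l = 0"
      using l unfolding on_line_def by auto
    have l2: "tL l' * fst p - uL l' * snd p + vL l' = 0" "tL l' * fst q - uL l' * snd q + vL l' = 0"
      using l' unfolding on_line_def by auto
    have a: "tL l * wx - uL l * wy = 0" "tL l' * wx - uL l' * wy = 0"
      unfolding wx_def wy_def using l1 l2 by algebra+
    have b: "vL l = uL l * snd p - tL l * fst p" "vL l' = uL l' * snd p - tL l' * fst p"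
      using l l' unfolding on_line_def by (auto simp: algebra_simps)
    have tu: "tL l = tL l' \<and> uL l = uL l'"
    proof (cases "uL l = 0")
      case True
      then have t1: "tL l = 1" using l unfolding is_line_def by auto
      then have "wx = 0" using a(1) True by simp
      then have "wy \<noteq> 0" using w by simp
      then have "uL l' = 0" using a(2) \<open>wx = 0\<close> by simp
      then have "tL l' = 1" using l' unfolding is_line_def by auto
      then show ?thesis using t1 True \<open>uL l' = 0\<close> by simp
    next
      case False
      then have u1: "uL l = 1" using l unfolding is_line_def by auto
      have "wx \<noteq> 0"
      proof
        assume "wx = 0" then have "wy = 0" using a(1) u1 by simp
        then show False using w \<open>wx = 0\<close> by simp
      qed
      have "uL l' \<noteq> 0"
      proof
        assume "uL l' = 0" then have "tL l' = 1" using l' unfolding is_line_def by auto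
        then show False using a(2) \<open>uL l' = 0\<close> \<open>wx \<noteq> 0\<close> by simp
      qed
      then have u1': "uL l' = 1" using l' unfolding is_line_def by auto
      have "tL l * wx = tL l' * wx" using a u1 u1' by (simp add: algebra_simps)
      then show ?thesis using \<open>wx \<noteq> 0\<close> u1 u1' by simp
    qed
    then show ?thesis using b by (intro line_eqI) auto
  qed
  show ?thesis using ex un by blast
qed

lemma lt_on:
  assumes "p \<noteq> q"
  shows "is_line (line_through p q)" "on_line p (line_through p q)" "on_line q (line_through p q)"
  using theI'[OF lt_ex1[OF assms]] unfolding line_through_def by auto

lemma lval_midpt:
  fixes X :: "'a::field line"
  assumes "(2::'a::field) \<noteq> 0"
  shows "lval X (midpt p q) = (lval X p + lval X q) / 2"
  unfolding lval_def midpt_def using assms four_nz[OF assms] by (simp add: field_simps)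

lemma llin_diff: "llin X (fst q - fst p, snd q - snd p) = lval X q - lval X p"
  unfolding llin_def lval_def by (simp add: algebra_simps)

lemma cross_ident:
  "llin X d * llin Y w - llin Y d * llin X w = cr X Y * (snd d * fst w - fst d * snd w)"
  unfolding llin_def cr_def by algebra

definition Epair :: "'a::field line \<Rightarrow> 'a line \<Rightarrow> 'a point \<Rightarrow> 'a \<times> 'a \<Rightarrow> 'a" where
  "Epair X Y m d = lval X m * llin Y d + lval Y m * llin X d"

lemma mid_E:
  fixes l X Y :: "'a::field line"
  assumes two: "(2::'a) \<noteq> 0" and nX: "\<not> parallel l X" and nY: "\<not> parallel l Y"
  shows "lval l (midpt (meet l X) (meet l Y)) = 0"
    and "Epair X Y (midpt (meet l X) (meet l Y)) (dirl l) = 0"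
proof -
  define P where "P = meet l X"
  define R where "R = meet l Y"
  have P: "lval l P = 0" "lval X P = 0" using meet_on[OF nX] unfolding P_def on_line_lval by auto
  have R: "lval l R = 0" "lval Y R = 0" using meet_on[OF nY] unfolding R_def on_line_lval by auto
  show "lval l (midpt (meet l X) (meet l Y)) = 0"
    unfolding P_def[symmetric] R_def[symmetric] lval_midpt[OF two] P R by simp
  define w where "w = (fst R - fst P, snd R - snd P)"
  have wX: "llin X w = lval X R" and wY: "llin Y w = - lval Y P" and wl: "llin l w = 0"
    unfolding w_def llin_diff using P R by auto
  have ci: "llin X (dirl l) * llin Y w - llin Y (dirl l) * llin X w = cr X Y * llin l w"
    using cross_ident[of X "dirl l" Y w] unfolding dirl_def llin_def by (simp add: algebra_simps)
  have "Epair X Y (midpt P R) (dirl l) = (lval X R * llin Y (dirl l) + lval Y P * llin X (dirl l)) / 2"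
    unfolding Epair_def lval_midpt[OF two] P R using two by (simp add: field_simps)
  also have "\<dots> = - (llin X (dirl l) * llin Y w - llin Y (dirl l) * llin X w) / 2"
    unfolding wX wY by (simp add: algebra_simps)
  also have "\<dots> = 0" unfolding ci wl by simp
  finally show "Epair X Y (midpt (meet l X) (meet l Y)) (dirl l) = 0" unfolding P_def R_def .
qed

lemma noncross_E:
  fixes l X Y :: "'a::field line"
  assumes "\<not> crosses l X Y" "lval l m = 0"
  shows "Epair X Y m (dirl l) = 0"
proof -
  have "l = X \<or> l = Y \<or> (parallel l X \<and> parallel l Y)" using assms(1) unfolding crosses_def by auto
  then show ?thesis
  proof (elim disjE)
    assume "l = X" then show ?thesis using assms(2) unfolding Epair_def llin_dirl by (simp add: cr_self)
  next
    assume "l = Y" then show ?thesis using assms(2) unfolding Epair_def llin_dirl by (simp add: cr_self)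
  next
    assume "parallel l X \<and> parallel l Y"
    then have "cr X l = 0" "cr Y l = 0" unfolding parallel_cr using cr_anti by (metis neg_equal_0_iff_equal)+
    then show ?thesis unfolding Epair_def llin_dirl by simp
  qed
qed

lemma par_sym: "parallel X Y \<longleftrightarrow> parallel Y X"
  unfolding parallel_def by (auto simp: mult.commute)

lemma par_refl: "parallel X X"
  unfolding parallel_def by (simp add: mult.commute)

lemma par_trans:
  assumes "is_line l" "parallel l X" "parallel l Y"
  shows "parallel X Y"
  using cr_trans[of l X Y] assms is_line_dir unfolding parallel_cr by blast

lemma noncross_par: "\<not> crosses l X Y \<Longrightarrow> parallel l X \<or> parallel l Y"
  unfolding crosses_def using par_refl[of X] par_refl[of Y] by auto

lemma mid_fin: "\<not> parallel l X \<Longrightarrow> \<not> parallel l Y \<Longrightarrow> mid X Y l = Fin (midpt (meet l X) (meet l Y))"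
  unfolding mid_def by simp

lemma mid_inf: "parallel l X \<or> parallel l Y \<Longrightarrow> mid X Y l = Infty"
  unfolding mid_def by simp

lemma bis_unique:
  assumes "bisector_mid A B Ap Bp l m" "bisector_mid A B Ap Bp l m'"
  shows "m = m'"
  using assms unfolding bisector_mid_def by auto

lemma bis_mid_eq:
  assumes "bisector_mid A B Ap Bp l m"
  shows "bis_midpoint A B Ap Bp l = m"
  unfolding bis_midpoint_def using assms bis_unique by blast

lemma bisector_facts:
  fixes A B Ap Bp l :: "'a::field line"
  assumes two: "(2::'a) \<noteq> 0" and Q: "quadrilateral A B Ap Bp" and bl: "bisects A B Ap Bp l"
  shows "\<exists>m. bis_midpoint A B Ap Bp l = Fin m \<and> lval l m = 0 \<and>
            Epair A Ap m (dirl l) = 0 \<and> Epair B Bp m (dirl l) = 0"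
proof -
  obtain m0 where bm: "bisector_mid A B Ap Bp l m0" using bl unfolding bisects_def by blast
  have bmeq: "bis_midpoint A B Ap Bp l = m0" using bis_mid_eq[OF bm] .
  have il: "is_line l" using bm unfolding bisector_mid_def by auto
  have np: "\<not> parallel A B" "\<not> parallel B Ap" "\<not> parallel Ap Bp" "\<not> parallel Bp A"
    using Q unfolding quadrilateral_def by auto
  have key: "\<not> ((parallel l A \<or> parallel l Ap) \<and> (parallel l B \<or> parallel l Bp))"
    using par_trans[OF il] np par_sym by metis
  show ?thesis
  proof (cases "crosses l A Ap")
    case True
    have nA: "\<not> parallel l A" "\<not> parallel l Ap"
    proof -
      have "\<not> (parallel l A \<or> parallel l Ap)"
      proof
        assume pa: "parallel l A \<or> parallel l Ap"
        then have "m0 = Infty" using bm True mid_inf unfolding bisector_mid_def by metis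
        show False
        proof (cases "crosses l B Bp")
          case True
          then have "mid B Bp l = Infty" using bm \<open>m0 = Infty\<close> unfolding bisector_mid_def by auto
          then have "parallel l B \<or> parallel l Bp" using mid_fin by fastforce
          then show False using key pa by blast
        next
          case False
          then show False using noncross_par key pa by blast
        qed
      qed
      then show "\<not> parallel l A" "\<not> parallel l Ap" by auto
    qed
    define m where "m = midpt (meet l A) (meet l Ap)"
    have m0: "m0 = Fin m" using bm True mid_fin[OF nA] unfolding bisector_mid_def m_def by auto
    have E0: "lval l m = 0" and E1: "Epair A Ap m (dirl l) = 0"
      using mid_E[OF two nA] unfolding m_def by auto
    have E2: "Epair B Bp m (dirl l) = 0"
    proof (cases "crosses l B Bp")
      case True
      then have mB: "mid B Bp l = Fin m" using bm m0 unfolding bisector_mid_def by auto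
      have nB: "\<not> parallel l B" "\<not> parallel l Bp"
        using mB mid_inf[of l B Bp] by auto
      then have "m = midpt (meet l B) (meet l Bp)" using mB mid_fin[OF nB] by simp
      then show ?thesis using mid_E(2)[OF two nB] by simp
    next
      case False
      then show ?thesis using noncross_E E0 by blast
    qed
    show ?thesis using bmeq m0 E0 E1 E2 by blast
  next
    case False
    then have cB: "crosses l B Bp" using bm unfolding bisector_mid_def by auto
    have nB: "\<not> parallel l B" "\<not> parallel l Bp"
      using noncross_par[OF False] key by blast+
    define m where "m = midpt (meet l B) (meet l Bp)"
    have m0: "m0 = Fin m" using bm cB mid_fin[OF nB] unfolding bisector_mid_def m_def by auto
    have E0: "lval l m = 0" and E2: "Epair B Bp m (dirl l) = 0"
      using mid_E[OF two nB] unfolding m_def by auto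
    have E1: "Epair A Ap m (dirl l) = 0" using noncross_E[OF False E0] .
    show ?thesis using bmeq m0 E0 E1 E2 by blast
  qed
qed

lemma dir_zero:
  fixes A B :: "'a::field line"
  assumes "cr A B \<noteq> 0" "llin A d = 0" "llin B d = 0"
  shows "d = (0, 0)"
proof -
  have "cr A B * fst d = 0" "cr A B * snd d = 0"
    using assms(2,3) unfolding llin_def cr_def by algebra+
  then show ?thesis using assms(1) by (simp add: prod_eq_iff)
qed

lemma inj_vals:
  fixes A B :: "'a::field line"
  assumes "cr A B \<noteq> 0" "lval A x = lval A y" "lval B x = lval B y"
  shows "x = y"
proof -
  have "llin A (fst x - fst y, snd x - snd y) = 0" "llin B (fst x - fst y, snd x - snd y) = 0"
    using assms(2,3) llin_diff[of A x y] llin_diff[of B x y] by auto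
  then have "(fst x - fst y, snd x - snd y) = (0, 0)" using dir_zero assms(1) by blast
  then show ?thesis by (simp add: prod_eq_iff)
qed

lemma cr_common:
  fixes X Y :: "'a::field line"
  assumes "llin X w = 0" "llin Y w = 0" "w \<noteq> (0, 0)"
  shows "cr X Y = 0"
proof -
  have "fst w * cr X Y = 0" "snd w * cr X Y = 0"
    using assms(1,2) unfolding llin_def cr_def by algebra+
  then show ?thesis using assms(3) by (auto simp: prod_eq_iff)
qed

lemma lval_centroid:
  fixes X :: "'a::field line"
  assumes two: "(2::'a) \<noteq> 0"
  shows "lval X (centroid A B Ap Bp) =
    (lval X (meet A B) + lval X (meet B Ap) + lval X (meet Ap Bp) + lval X (meet Bp A)) / 4"
proof -
  have f: "(4::'a) \<noteq> 0" using four_nz[OF two] .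
  have "(16::'a) = 4 * 4" by simp
  then have s: "(16::'a) \<noteq> 0" using f by (metis no_zero_divisors)
  show ?thesis unfolding centroid_def Let_def lval_def using f s by (simp add: field_simps)
qed

lemma div_rel:
  fixes d X a b c Y Z :: "'a::field"
  assumes "d \<noteq> 0" "d * X = a * Y + b * Z + c"
  shows "X = a/d * Y + b/d * Z + c/d"
  using assms by (simp add: field_simps)

theorem corollary6p5:
  fixes A B Ap Bp :: "'a::field line"
  assumes char: "(2::'a) \<noteq> 0"
    and Q: "quadrilateral A B Ap Bp"
  shows "(\<forall>l1 l2. bisects A B Ap Bp l1 \<and> bisects A B Ap Bp l2 \<and>
            Q_orthogonal A B Ap Bp l1 l2 \<and> \<not> both_par_to_par_pair A B Ap Bp l1 l2
            \<longrightarrow> Q_antipodal A B Ap Bp l1 l2 \<and> Q_pair A B Ap Bp l1 l2)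
       \<and> (\<forall>l1 l2. Q_antipodal A B Ap Bp l1 l2 \<and>
            bis_midpoint A B Ap Bp l1 \<noteq> bis_midpoint A B Ap Bp l2
            \<longrightarrow> Q_orthogonal A B Ap Bp l1 l2 \<and> Q_pair A B Ap Bp l1 l2)"
proof -
  note two = char
  have lines: "is_line A" "is_line B" "is_line Ap" "is_line Bp"
    and np: "\<not> parallel A B" "\<not> parallel B Ap" "\<not> parallel Ap Bp" "\<not> parallel Bp A"
    and nconc: "\<not> (\<exists>p. on_line p A \<and> on_line p B \<and> on_line p Ap \<and> on_line p Bp)"
    using Q unfolding quadrilateral_def by auto
  define dl where "dl = cr A B"
  have dl: "dl \<noteq> 0" using np(1) unfolding dl_def parallel_cr .
  define ka where "ka = cr Ap B / dl"
  define kb where "kb = cr A Ap / dl"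
  define k0 where "k0 = (dl * vL Ap - cr Ap B * vL A - cr A Ap * vL B) / dl"
  define ma where "ma = cr Bp B / dl"
  define mb where "mb = cr A Bp / dl"
  define m0 where "m0 = (dl * vL Bp - cr Bp B * vL A - cr A Bp * vL B) / dl"
  have vAp: "lval Ap p = ka * lval A p + kb * lval B p + k0" for p
  proof -
    have "dl * lval Ap p = cr Ap B * lval A p + cr A Ap * lval B p + (dl * vL Ap - cr Ap B * vL A - cr A Ap * vL B)"
      unfolding dl_def lval_def cr_def by algebra
    then show ?thesis unfolding ka_def kb_def k0_def by (rule div_rel[OF dl])
  qed
  have vBp: "lval Bp p = ma * lval A p + mb * lval B p + m0" for p
  proof -
    have "dl * lval Bp p = cr Bp B * lval A p + cr A Bp * lval B p + (dl * vL Bp - cr Bp B * vL A - cr A Bp * vL B)"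
      unfolding dl_def lval_def cr_def by algebra
    then show ?thesis unfolding ma_def mb_def m0_def by (rule div_rel[OF dl])
  qed
  have lAp: "llin Ap d = ka * llin A d + kb * llin B d" for d
  proof -
    have "dl * llin Ap d = cr Ap B * llin A d + cr A Ap * llin B d + 0"
      unfolding dl_def llin_def cr_def by algebra
    then show ?thesis using div_rel[OF dl] unfolding ka_def kb_def by fastforce
  qed
  have lBp: "llin Bp d = ma * llin A d + mb * llin B d" for d
  proof -
    have "dl * llin Bp d = cr Bp B * llin A d + cr A Bp * llin B d + 0"
      unfolding dl_def llin_def cr_def by algebra
    then show ?thesis using div_rel[OF dl] unfolding ma_def mb_def by fastforce
  qed
  have ka: "ka \<noteq> 0"
  proof -
    have "cr B Ap \<noteq> 0" using np(2) unfolding parallel_cr .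
    then have "cr Ap B \<noteq> 0" using cr_anti[of Ap B] by simp
    then show ?thesis unfolding ka_def using dl by simp
  qed
  have mb: "mb \<noteq> 0"
  proof -
    have "cr Bp A \<noteq> 0" using np(4) unfolding parallel_cr .
    then have "cr A Bp \<noteq> 0" using cr_anti[of A Bp] by simp
    then show ?thesis unfolding mb_def using dl by simp
  qed
  have D: "ka*mb - kb*ma \<noteq> 0"
  proof -
    have plk: "cr Ap B * cr A Bp - cr A Ap * cr Bp B = dl * cr Ap Bp"
      unfolding dl_def cr_def by algebra
    have "ka*mb - kb*ma = (cr Ap B * cr A Bp - cr A Ap * cr Bp B) / (dl*dl)"
      unfolding ka_def kb_def ma_def mb_def using dl by (simp add: field_simps)
    also have "\<dots> = cr Ap Bp / dl" unfolding plk using dl by simp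
    finally show ?thesis using np(3) dl unfolding parallel_cr by simp
  qed
  define P1 where "P1 = meet A B"
  define P2 where "P2 = meet B Ap"
  define P3 where "P3 = meet Ap Bp"
  define P4 where "P4 = meet Bp A"
  have P1: "lval A P1 = 0" "lval B P1 = 0" using meet_on[OF np(1)] unfolding P1_def on_line_lval by auto
  have P2: "lval B P2 = 0" "lval Ap P2 = 0" using meet_on[OF np(2)] unfolding P2_def on_line_lval by auto
  have P3: "lval Ap P3 = 0" "lval Bp P3 = 0" using meet_on[OF np(3)] unfolding P3_def on_line_lval by auto
  have P4: "lval Bp P4 = 0" "lval A P4 = 0" using meet_on[OF np(4)] unfolding P4_def on_line_lval by auto
  have P1k: "lval Ap P1 = k0" "lval Bp P1 = m0" using vAp[of P1] vBp[of P1] P1 by simp_all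
  have nc: "k0 \<noteq> 0 \<or> m0 \<noteq> 0"
  proof (rule ccontr)
    assume "\<not> (k0 \<noteq> 0 \<or> m0 \<noteq> 0)"
    then have "on_line P1 A \<and> on_line P1 B \<and> on_line P1 Ap \<and> on_line P1 Bp"
      using P1 P1k unfolding on_line_lval by simp
    then show False using nconc by blast
  qed
  define x2 where "x2 = lval A P2"
  define x3 where "x3 = lval A P3"
  define y3 where "y3 = lval B P3"
  define y4 where "y4 = lval B P4"
  have ex2: "ka*x2 + k0 = 0" using vAp[of P2] P2 unfolding x2_def by simp
  have ex3: "ka*x3 + kb*y3 + k0 = 0" "ma*x3 + mb*y3 + m0 = 0"
    using vAp[of P3] vBp[of P3] P3 unfolding x3_def y3_def by simp_all
  have ey4: "mb*y4 + m0 = 0" using vBp[of P4] P4 unfolding y4_def by simp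
  define c where "c = centroid A B Ap Bp"
  define ac where "ac = lval A c"
  define bc where "bc = lval B c"
  have ac4: "4*ac = x2 + x3"
    unfolding ac_def c_def lval_centroid[OF two] using P1 P4 four_nz[OF two]
    unfolding x2_def x3_def P1_def P2_def P3_def P4_def by simp
  have bc4: "4*bc = y3 + y4"
    unfolding bc_def c_def lval_centroid[OF two] using P1 P2 four_nz[OF two]
    unfolding y3_def y4_def P1_def P2_def P3_def P4_def by simp
  have hac: "4*ka*(ka*mb - kb*ma)*ac = -k0*(ka*mb - kb*ma) + ka*(kb*m0 - k0*mb)"
    using ac4 ex2 ex3 by algebra
  have hbc: "4*mb*(ka*mb - kb*ma)*bc = mb*(ma*k0 - ka*m0) - m0*(ka*mb - kb*ma)"
    using bc4 ey4 ex3 by algebra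
  have conv1: "Epair A Ap m d = g1x ka kb k0 (lval A m) (lval B m) * llin A d + g1y kb (lval A m) * llin B d" for m d
    unfolding Epair_def g1x_def g1y_def vAp lAp by algebra
  have conv2: "Epair B Bp m d = g2x ma (lval B m) * llin A d + g2y ma mb m0 (lval A m) (lval B m) * llin B d" for m d
    unfolding Epair_def g2x_def g2y_def vBp lBp by algebra
  have dnz: "llin A (dirl l) \<noteq> 0 \<or> llin B (dirl l) \<noteq> 0" if "is_line l" for l
  proof (rule ccontr)
    assume "\<not> ?thesis"
    then have "dirl l = (0,0)" using dir_zero[of A B "dirl l"] dl unfolding dl_def by auto
    then show False using is_line_dir[OF that] unfolding dirl_def by auto
  qed
  have qf: "qform A B Ap Bp d1 d2 = dl * QP ka kb ma mb (llin A d1) (llin B d1) (llin A d2) (llin B d2)" for d1 d2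
  proof -
    have h1: "dl * qform A B Ap Bp d1 d2 = cr Ap B*cr Bp B*(llin A d1)*(llin A d2)
        + cr Ap B*cr A Bp*((llin A d1)*(llin B d2)+(llin A d2)*(llin B d1)) + cr A Ap*cr A Bp*(llin B d1)*(llin B d2)"
      unfolding dl_def qform_def qalpha_def qbeta_def qgamma_def llin_def cr_def by algebra
    have h2: "dl * (dl * QP ka kb ma mb (llin A d1) (llin B d1) (llin A d2) (llin B d2)) = cr Ap B*cr Bp B*(llin A d1)*(llin A d2)
        + cr Ap B*cr A Bp*((llin A d1)*(llin B d2)+(llin A d2)*(llin B d1)) + cr A Ap*cr A Bp*(llin B d1)*(llin B d2)"
      unfolding QP_def ka_def kb_def ma_def mb_def using dl by (simp add: field_simps)
    have "dl * qform A B Ap Bp d1 d2 = dl * (dl * QP ka kb ma mb (llin A d1) (llin B d1) (llin A d2) (llin B d2))"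
      using h1 h2 by (simp only:)
    then show ?thesis using dl by (simp only: mult_cancel_left) simp
  qed
  have midc: "midpt m1 m2 = c \<longleftrightarrow> lval A m1 + lval A m2 = 2*ac \<and> lval B m1 + lval B m2 = 2*bc" for m1 m2
  proof
    assume "midpt m1 m2 = c"
    then have "lval A (midpt m1 m2) = ac" "lval B (midpt m1 m2) = bc" unfolding ac_def bc_def by auto
    then show "lval A m1 + lval A m2 = 2*ac \<and> lval B m1 + lval B m2 = 2*bc"
      unfolding lval_midpt[OF two] using two by (simp add: field_simps)
  next
    assume h: "lval A m1 + lval A m2 = 2*ac \<and> lval B m1 + lval B m2 = 2*bc"
    have "lval A (midpt m1 m2) = lval A c" "lval B (midpt m1 m2) = lval B c"
      unfolding lval_midpt[OF two] using h two unfolding ac_def bc_def by simp_all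
    then show "midpt m1 m2 = c" using inj_vals dl unfolding dl_def by blast
  qed
  have bisl: "is_line l" if "bisects A B Ap Bp l" for l
    using that unfolding bisects_def bisector_mid_def by auto
  have par2: "llin A (dirl l1) * llin B (dirl l2) - llin A (dirl l2) * llin B (dirl l1) = dl * cr l1 l2" for l1 l2
    unfolding llin_def dirl_def cr_def dl_def fst_conv snd_conv by algebra
  have part2: "Q_orthogonal A B Ap Bp l1 l2 \<and> Q_pair A B Ap Bp l1 l2"
    if anti: "Q_antipodal A B Ap Bp l1 l2" and ne: "bis_midpoint A B Ap Bp l1 \<noteq> bis_midpoint A B Ap Bp l2" for l1 l2
  proof -
    obtain m1' m2' where b1: "bisects A B Ap Bp l1" and b2: "bisects A B Ap Bp l2"
      and bm1: "bis_midpoint A B Ap Bp l1 = Fin m1'" and bm2: "bis_midpoint A B Ap Bp l2 = Fin m2'"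
      and mc: "midpt m1' m2' = centroid A B Ap Bp"
      using anti unfolding Q_antipodal_def by blast
    obtain m1 where f1: "bis_midpoint A B Ap Bp l1 = Fin m1" "Epair A Ap m1 (dirl l1) = 0" "Epair B Bp m1 (dirl l1) = 0"
      using bisector_facts[OF two Q b1] by blast
    obtain m2 where f2: "bis_midpoint A B Ap Bp l2 = Fin m2" "Epair A Ap m2 (dirl l2) = 0" "Epair B Bp m2 (dirl l2) = 0"
      using bisector_facts[OF two Q b2] by blast
    have "m1' = m1" "m2' = m2" using bm1 bm2 f1(1) f2(1) by auto
    then have mc': "midpt m1 m2 = c" using mc unfolding c_def by simp
    have ne': "\<not> (lval A m1 = lval A m2 \<and> lval B m1 = lval B m2)"
    proof
      assume "lval A m1 = lval A m2 \<and> lval B m1 = lval B m2"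
      then have "m1 = m2" using inj_vals dl unfolding dl_def by blast
      then show False using ne f1(1) f2(1) by simp
    qed
    have qp: "QP ka kb ma mb (llin A (dirl l1)) (llin B (dirl l1)) (llin A (dirl l2)) (llin B (dirl l2)) = 0"
      using core2[OF ka mb D two nc hac hbc f1(2)[unfolded conv1] f1(3)[unfolded conv2]
          f2(2)[unfolded conv1] f2(3)[unfolded conv2] dnz[OF bisl[OF b1]] dnz[OF bisl[OF b2]]]
        mc'[unfolded midc] ne' by blast
    have orth: "Q_orthogonal A B Ap Bp l1 l2"
      unfolding Q_orthogonal_def using qf[of "dirl l1" "dirl l2"] qp unfolding dirl_def by simp
    show ?thesis using orth anti unfolding Q_pair_def by blast
  qed
  have part1: "Q_antipodal A B Ap Bp l1 l2 \<and> Q_pair A B Ap Bp l1 l2"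
    if b1: "bisects A B Ap Bp l1" and b2: "bisects A B Ap Bp l2" and orth: "Q_orthogonal A B Ap Bp l1 l2"
      and nbp: "\<not> both_par_to_par_pair A B Ap Bp l1 l2" for l1 l2
  proof -
    obtain m1 where f1: "bis_midpoint A B Ap Bp l1 = Fin m1" "Epair A Ap m1 (dirl l1) = 0" "Epair B Bp m1 (dirl l1) = 0"
      using bisector_facts[OF two Q b1] by blast
    obtain m2 where f2: "bis_midpoint A B Ap Bp l2 = Fin m2" "Epair A Ap m2 (dirl l2) = 0" "Epair B Bp m2 (dirl l2) = 0"
      using bisector_facts[OF two Q b2] by blast
    define p1 where "p1 = llin A (dirl l1)"
    define q1 where "q1 = llin B (dirl l1)"
    define p2 where "p2 = llin A (dirl l2)"
    define q2 where "q2 = llin B (dirl l2)"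
    have il1: "is_line l1" using bisl[OF b1] .
    have d1: "p1 \<noteq> 0 \<or> q1 \<noteq> 0" using dnz[OF il1] unfolding p1_def q1_def .
    have d2: "p2 \<noteq> 0 \<or> q2 \<noteq> 0" using dnz[OF bisl[OF b2]] unfolding p2_def q2_def .
    have qp: "QP ka kb ma mb p1 q1 p2 q2 = 0"
      using orth qf[of "dirl l1" "dirl l2"] dl unfolding Q_orthogonal_def p1_def q1_def p2_def q2_def dirl_def by simp
    have disj: "(lval A m1 + lval A m2 = 2*ac \<and> lval B m1 + lval B m2 = 2*bc) \<or>
         (p1*q2 = p2*q1 \<and> ((kb = 0 \<and> p1 = 0) \<or> (ma = 0 \<and> q1 = 0) \<or>
           (k0*(ma*p1 + mb*q1) - m0*(ka*p1 + kb*q1) = 0 \<and> ka*m0*p1 + mb*k0*q1 = 0)))"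
      using core1[OF ka mb D two nc hac hbc f1(2)[unfolded conv1] f1(3)[unfolded conv2]
          f2(2)[unfolded conv1] f2(3)[unfolded conv2] d1[unfolded p1_def q1_def] d2[unfolded p2_def q2_def]
          qp[unfolded p1_def q1_def p2_def q2_def]]
      unfolding p1_def q1_def p2_def q2_def .
    have "\<not> (p1*q2 = p2*q1 \<and> ((kb = 0 \<and> p1 = 0) \<or> (ma = 0 \<and> q1 = 0) \<or>
           (k0*(ma*p1 + mb*q1) - m0*(ka*p1 + kb*q1) = 0 \<and> ka*m0*p1 + mb*k0*q1 = 0)))"
    proof
      assume h: "p1*q2 = p2*q1 \<and> ((kb = 0 \<and> p1 = 0) \<or> (ma = 0 \<and> q1 = 0) \<or>
           (k0*(ma*p1 + mb*q1) - m0*(ka*p1 + kb*q1) = 0 \<and> ka*m0*p1 + mb*k0*q1 = 0))"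
      have c12: "cr l1 l2 = 0" using par2[of l1 l2] h dl unfolding p1_def q1_def p2_def q2_def by simp
      have crA': "cr l A = - llin A (dirl l)" "cr l B = - llin B (dirl l)" for l
        unfolding llin_dirl by (rule cr_anti)+
      show False
      proof (cases "kb = 0 \<and> p1 = 0")
        case True
        then have "q1 \<noteq> 0" using d1 by simp
        then have "p2 = 0" using h True by simp
        have "cr A Ap = 0" using True dl unfolding kb_def by simp
        then have "both_par_to_par_pair A B Ap Bp l1 l2"
          unfolding both_par_to_par_pair_def parallel_cr crA' using True \<open>p2 = 0\<close>
          unfolding p1_def p2_def by simp
        then show False using nbp by simp
      next
        case F1: False
        show False
        proof (cases "ma = 0 \<and> q1 = 0")
          case True
          then have "p1 \<noteq> 0" using d1 by simp
          then have "q2 = 0" using h True by simp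
          have "cr Bp B = 0" using True dl unfolding ma_def by simp
          then have "cr B Bp = 0" using cr_anti[of B Bp] by simp
          then have "both_par_to_par_pair A B Ap Bp l1 l2"
            unfolding both_par_to_par_pair_def parallel_cr crA' using True \<open>q2 = 0\<close>
            unfolding q1_def q2_def by simp
          then show False using nbp by simp
        next
          case False
          then have Z1: "k0*(ma*p1 + mb*q1) - m0*(ka*p1 + kb*q1) = 0" and Z2: "ka*m0*p1 + mb*k0*q1 = 0"
            using h F1 by auto
          define W13 where "W13 = (fst P3 - fst P1, snd P3 - snd P1)"
          define W24 where "W24 = (fst P4 - fst P2, snd P4 - snd P2)"
          have w13: "llin A W13 = x3" "llin B W13 = y3"
            unfolding W13_def llin_diff x3_def y3_def using P1 by simp_all
          have w24: "llin A W24 = - x2" "llin B W24 = y4"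
            unfolding W24_def llin_diff x2_def y4_def using P4 P2 by simp_all
          have ci: "llin A (dirl l1) * llin B w - llin B (dirl l1) * llin A w = dl * llin l1 w" for w
            using cross_ident[of A "dirl l1" B w] unfolding dl_def dirl_def llin_def by (simp add: algebra_simps)
          have "(ka*mb - kb*ma) * (p1*y3 - q1*x3) = 0" using Z1 ex3 by algebra
          then have "p1*y3 - q1*x3 = 0" using D by simp
          then have "dl * llin l1 W13 = 0" using ci[of W13] w13 unfolding p1_def q1_def by simp
          then have l13: "llin l1 W13 = 0" using dl by simp
          have "ka*mb*(p1*y4 + q1*x2) = 0" using Z2 ex2 ey4 by algebra
          then have "p1*y4 + q1*x2 = 0" using ka mb by simp
          then have "dl * llin l1 W24 = 0" using ci[of W24] w24 unfolding p1_def q1_def by simp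
          then have l24: "llin l1 W24 = 0" using dl by simp
          have P13: "P1 \<noteq> P3"
          proof
            assume "P1 = P3"
            then have "on_line P1 A \<and> on_line P1 B \<and> on_line P1 Ap \<and> on_line P1 Bp"
              using P1 P3 unfolding on_line_lval by simp
            then show False using nconc by blast
          qed
          have P24: "P2 \<noteq> P4"
          proof
            assume "P2 = P4"
            then have "on_line P2 A \<and> on_line P2 B \<and> on_line P2 Ap \<and> on_line P2 Bp"
              using P2 P4 unfolding on_line_lval by simp
            then show False using nconc by blast
          qed
          have W13nz: "W13 \<noteq> (0,0)" using P13 unfolding W13_def by (auto simp: prod_eq_iff)
          have W24nz: "W24 \<noteq> (0,0)" using P24 unfolding W24_def by (auto simp: prod_eq_iff)
          define L1 where "L1 = diag1 A B Ap Bp"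
          define L2 where "L2 = diag2 A B Ap Bp"
          have L1: "llin L1 W13 = 0"
            using lt_on[OF P13] unfolding L1_def diag1_def P1_def[symmetric] P3_def[symmetric]
              W13_def llin_diff on_line_lval by simp
          have L2: "llin L2 W24 = 0"
            using lt_on[OF P24] unfolding L2_def diag2_def P2_def[symmetric] P4_def[symmetric]
              W24_def llin_diff on_line_lval by simp
          have c1: "cr l1 L1 = 0" using cr_common[OF l13 L1 W13nz] .
          have c2: "cr l1 L2 = 0" using cr_common[OF l24 L2 W24nz] .
          have dl1: "uL l1 \<noteq> 0 \<or> tL l1 \<noteq> 0" using is_line_dir[OF il1] .
          have "cr L1 L2 = 0" using cr_trans[OF c1 c2 dl1] .
          moreover have "cr l2 L1 = 0" using cr_trans[OF c12 c1 dl1] .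
          ultimately have "both_par_to_par_pair A B Ap Bp l1 l2"
            unfolding both_par_to_par_pair_def parallel_cr L1_def[symmetric] L2_def[symmetric] using c1 by simp
          then show False using nbp by simp
        qed
      qed
    qed
    then have "lval A m1 + lval A m2 = 2*ac \<and> lval B m1 + lval B m2 = 2*bc" using disj by blast
    then have "midpt m1 m2 = centroid A B Ap Bp" using midc unfolding c_def by blast
    then have anti: "Q_antipodal A B Ap Bp l1 l2"
      unfolding Q_antipodal_def using b1 b2 f1(1) f2(1) by blast
    show ?thesis using anti orth unfolding Q_pair_def by blast
  qed
  show ?thesis using part1 part2 by blast
qed

end
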